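(* Let $0<\alpha<\beta<1$ and $t\geq1$. Let $\mathcal{P}_t'$ be the set of real polynomials $f$ of degree at most $t$ with $f(0)=0$ and $f(1)=1$. Suppose $f^\star\in\mathcal{P}_t'$ is a minimizer of \[ \frac{\max_{\lambda\in[0,\alpha]}|f(\lambda)|}{\min_{\lambda\in[\beta,1]}|f(\lambda)|} \] over $f\in\mathcal{P}_t'$. Then $f^\star$ has no roots in the interval $[\alpha,1]$.
   Context: The objective is taken to be $+\infty$ when the denominator vanishes. *)

theory Defs
  imports "HOL-Analysis.Analysis" "HOL-Computational_Algebra.Polynomial" "HOL-Library.Extended_Real"
begin

definition Pt' :: "nat \<Rightarrow> real poly set" where
  "Pt' t = {f. degree f \<le> t \<and> poly f 0 = 0 \<and> poly f 1 = 1}"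

text \<open>Max/min over compact intervals of a continuous function are
  expressed as Sup/Inf (they are attained).\<close>
definition ratio_obj :: "real \<Rightarrow> real \<Rightarrow> real poly \<Rightarrow> ereal" where
  "ratio_obj a b f =
     (let num = Sup ((\<lambda>x. \<bar>poly f x\<bar>) ` {0..a});
          den = Inf ((\<lambda>x. \<bar>poly f x\<bar>) ` {b..1})
      in if den = 0 then \<infinity> else ereal (num / den))"

end

theory Submission
  imports Defs
begin

lemma cont_abs_poly: "continuous_on S (\<lambda>x::real. \<bar>poly p x\<bar>)"
  by (intro continuous_intros)

lemma bdd_sup: "bdd_above ((\<lambda>x. \<bar>poly p x\<bar>) ` {a..b::real})"
proof -
  have "compact ((\<lambda>x. \<bar>poly p x\<bar>) ` {a..b::real})"
    by (rule compact_continuous_image[OF cont_abs_poly]) simp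
  then show ?thesis by (intro bounded_imp_bdd_above compact_imp_bounded)
qed

lemma sup_upper: "x \<in> {a..b} \<Longrightarrow> \<bar>poly p x\<bar> \<le> Sup ((\<lambda>x. \<bar>poly p x\<bar>) ` {a..b::real})"
  by (rule cSup_upper) (auto intro: bdd_sup)

lemma sup_least: "a \<le> b \<Longrightarrow> (\<forall>x\<in>{a..b}. \<bar>poly p x\<bar> \<le> B) \<Longrightarrow> Sup ((\<lambda>x. \<bar>poly p x\<bar>) ` {a..b::real}) \<le> B"
  by (rule cSup_least) auto

lemma bdd_inf: "bdd_below ((\<lambda>x. \<bar>poly p x\<bar>) ` {a..b::real})"
  by (rule bdd_belowI[of _ 0]) auto

lemma inf_lower: "x \<in> {a..b} \<Longrightarrow> Inf ((\<lambda>x. \<bar>poly p x\<bar>) ` {a..b::real}) \<le> \<bar>poly p x\<bar>"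
  by (rule cInf_lower) (auto intro: bdd_inf)

lemma inf_greatest: "a \<le> b \<Longrightarrow> (\<forall>x\<in>{a..b}. B \<le> \<bar>poly p x\<bar>) \<Longrightarrow> B \<le> Inf ((\<lambda>x. \<bar>poly p x\<bar>) ` {a..b::real})"
  by (rule cInf_greatest) auto

lemma ratio_fin: "Inf ((\<lambda>x. \<bar>poly f x\<bar>) ` {b..1}) \<noteq> 0 \<Longrightarrow>
   ratio_obj a b f = ereal (Sup ((\<lambda>x. \<bar>poly f x\<bar>) ` {0..a}) / Inf ((\<lambda>x. \<bar>poly f x\<bar>) ` {b..1}))"
  unfolding ratio_obj_def Let_def by simp

lemma ratio_inf: "Inf ((\<lambda>x. \<bar>poly f x\<bar>) ` {b..1}) = 0 \<Longrightarrow> ratio_obj a b f = \<infinity>"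
  unfolding ratio_obj_def Let_def by simp

theorem lemma2:
  fixes \<alpha> \<beta> :: real and t :: nat and fstar :: "real poly"
  assumes "0 < \<alpha>" "\<alpha> < \<beta>" "\<beta> < 1" "t \<ge> 1"
    and "fstar \<in> Pt' t"
    and "\<forall>g \<in> Pt' t. ratio_obj \<alpha> \<beta> fstar \<le> ratio_obj \<alpha> \<beta> g"
  shows "\<forall>x \<in> {\<alpha>..1}. poly fstar x \<noteq> 0"
proof (rule ccontr)
  assume "\<not> ?thesis"
  then obtain r where r: "r \<in> {\<alpha>..1}" "poly fstar r = 0" by auto
  let ?f = fstar
  have f0: "poly ?f 0 = 0" and f1: "poly ?f 1 = 1" and fdeg: "degree ?f \<le> t"
    using assms(5) by (auto simp: Pt'_def)
  have r1: "r < 1" using r f1 by (cases "r = 1") auto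
  define N where "N = Sup ((\<lambda>x. \<bar>poly ?f x\<bar>) ` {0..\<alpha>})"
  define D where "D = Inf ((\<lambda>x. \<bar>poly ?f x\<bar>) ` {\<beta>..1})"
  let ?x = "[:0, 1:] :: real poly"
  have xP: "?x \<in> Pt' t" using assms(4) by (simp add: Pt'_def)
  have D0: "D \<ge> 0" unfolding D_def using assms by (intro inf_greatest) auto
  have Dpos: "D > 0"
  proof (rule ccontr)
    assume "\<not> D > 0"
    then have "D = 0" using D0 by simp
    then have "ratio_obj \<alpha> \<beta> ?f = \<infinity>" unfolding D_def by (rule ratio_inf)
    moreover have "\<beta> \<le> Inf ((\<lambda>x. \<bar>poly ?x x\<bar>) ` {\<beta>..1})"
      using assms by (intro inf_greatest) auto
    then have "ratio_obj \<alpha> \<beta> ?x \<noteq> \<infinity>" using assms by (subst ratio_fin) auto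
    ultimately show False using assms(6) xP by force
  qed
  have rb: "r < \<beta>"
  proof (rule ccontr)
    assume "\<not> r < \<beta>"
    then have "D \<le> \<bar>poly ?f r\<bar>" unfolding D_def using r by (intro inf_lower) auto
    then show False using r Dpos by simp
  qed
  have fne: "?f \<noteq> 0" using f1 by auto
  have "[:-r, 1:] dvd ?f" using r(2) by (simp add: poly_eq_0_iff_dvd)
  then obtain h where fh: "?f = [:-r, 1:] * h" by (elim dvdE)
  have hne: "h \<noteq> 0" using fne fh by auto
  have pf: "\<And>x. poly ?f x = (x - r) * poly h x" by (subst fh) (simp add: algebra_simps)
  have h0: "poly h 0 = 0" using f0 pf[of 0] r assms(1) by simp
  have h1: "(1 - r) * poly h 1 = 1" using f1 pf[of 1] by simp
  have "finite {x. poly ?f x = 0}" using fne by (rule poly_roots_finite)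
  moreover have "infinite {0..\<alpha>}" using assms(1) by simp
  ultimately obtain x0 where x0: "x0 \<in> {0..\<alpha>}" "poly ?f x0 \<noteq> 0"
    by (metis (mono_tags, lifting) mem_Collect_eq rev_finite_subset subsetI)
  have "\<bar>poly ?f x0\<bar> \<le> N" unfolding N_def using x0(1) by (rule sup_upper)
  then have Npos: "N > 0" using x0 by simp
  obtain M where M: "\<forall>x\<in>{0..\<alpha>}. \<bar>poly h x\<bar> \<le> M"
    using bdd_sup[of h 0 \<alpha>] by (auto simp: bdd_above_def)
  have M0: "M \<ge> 0" using M assms(1) by (metis abs_ge_zero atLeastAtMost_iff order_trans order_refl less_imp_le)
  define e where "e = N / (M + 1)"
  have epos: "e > 0" using Npos M0 by (simp add: e_def)
  have eM: "e * M \<le> N"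
  proof -
    have "e * M \<le> e * (M + 1)" using epos by simp
    also have "\<dots> = N" using M0 by (simp add: e_def)
    finally show ?thesis .
  qed
  define s where "s = r - e"
  define c where "c = (1 - r) / (1 - s)"
  have s1: "s < 1" using r1 epos by (simp add: s_def)
  have cpos: "c > 0" using r1 s1 by (simp add: c_def)
  define g where "g = smult c ([:-s, 1:] * h)"
  have pg: "\<And>x. poly g x = c * ((x - s) * poly h x)" by (simp add: g_def algebra_simps)
  have gdeg: "degree g \<le> t"
  proof -
    have "degree g \<le> degree ([:-s, 1:] * h)" by (simp add: g_def degree_smult_le)
    also have "\<dots> = 1 + degree h" using hne by (subst degree_mult_eq) auto
    also have "\<dots> = degree ?f" using hne by (subst fh, subst degree_mult_eq) auto
    finally show ?thesis using fdeg by simp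
  qed
  have g1: "poly g 1 = 1"
  proof -
    have "poly g 1 = (1 - r) / (1 - s) * (1 - s) * poly h 1" by (simp add: pg c_def)
    also have "\<dots> = (1 - r) * poly h 1" using s1 by simp
    finally show ?thesis using h1 by simp
  qed
  have gP: "g \<in> Pt' t" using gdeg g1 h0 by (simp add: Pt'_def pg)
  have gN: "\<forall>x\<in>{0..\<alpha>}. \<bar>poly g x\<bar> \<le> c * N"
  proof
    fix x assume x: "x \<in> {0..\<alpha>}"
    have ax: "\<bar>poly g x\<bar> = c * (\<bar>x - s\<bar> * \<bar>poly h x\<bar>)" using cpos by (simp add: pg abs_mult)
    show "\<bar>poly g x\<bar> \<le> c * N"
    proof (cases "x \<le> s")
      case True
      have "\<bar>x - s\<bar> \<le> \<bar>x - r\<bar>" using True epos by (simp add: s_def)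
      then have "\<bar>x - s\<bar> * \<bar>poly h x\<bar> \<le> \<bar>x - r\<bar> * \<bar>poly h x\<bar>" by (simp add: mult_right_mono)
      also have "\<dots> = \<bar>poly ?f x\<bar>" by (simp add: pf abs_mult)
      also have "\<dots> \<le> N" unfolding N_def using x by (rule sup_upper)
      finally show ?thesis using ax cpos by simp
    next
      case False
      have "\<bar>x - s\<bar> \<le> e" using False x r by (simp add: s_def)
      then have "\<bar>x - s\<bar> * \<bar>poly h x\<bar> \<le> e * M"
        using M x epos by (intro mult_mono) auto
      then show ?thesis using ax cpos eM by (simp add: mult_left_mono)
    qed
  qed
  have gD: "\<forall>x\<in>{\<beta>..1}. c * D * (1 + e) \<le> \<bar>poly g x\<bar>"
  proof
    fix x assume x: "x \<in> {\<beta>..1}"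
    have xr: "0 < x - r" "x - r \<le> 1" using x rb r assms(1) by auto
    have fD: "D \<le> \<bar>poly ?f x\<bar>" unfolding D_def using x by (rule inf_lower)
    have fx: "\<bar>poly ?f x\<bar> = (x - r) * \<bar>poly h x\<bar>" using xr by (simp add: pf abs_mult)
    have hD: "D \<le> \<bar>poly h x\<bar>"
    proof -
      have "(x - r) * \<bar>poly h x\<bar> \<le> 1 * \<bar>poly h x\<bar>" using xr by (intro mult_right_mono) auto
      then show ?thesis using fD fx by simp
    qed
    have xs: "x - s = (x - r) + e" by (simp add: s_def)
    have "\<bar>poly g x\<bar> = c * (\<bar>x - s\<bar> * \<bar>poly h x\<bar>)" using cpos by (simp add: pg abs_mult)
    also have "\<bar>x - s\<bar> = (x - r) + e" using xs xr epos by simp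
    finally have "\<bar>poly g x\<bar> = c * ((x - r) * \<bar>poly h x\<bar> + e * \<bar>poly h x\<bar>)"
      by (simp add: algebra_simps)
    moreover have "D * (1 + e) \<le> (x - r) * \<bar>poly h x\<bar> + e * \<bar>poly h x\<bar>"
    proof -
      have "e * D \<le> e * \<bar>poly h x\<bar>" using hD epos by (simp add: mult_left_mono)
      then show ?thesis using fD fx by (simp add: algebra_simps)
    qed
    ultimately show "c * D * (1 + e) \<le> \<bar>poly g x\<bar>" using cpos
      by (metis mult.assoc mult_left_mono less_imp_le)
  qed
  define Ng where "Ng = Sup ((\<lambda>x. \<bar>poly g x\<bar>) ` {0..\<alpha>})"
  define Dg where "Dg = Inf ((\<lambda>x. \<bar>poly g x\<bar>) ` {\<beta>..1})"
  have Ng: "Ng \<le> c * N" unfolding Ng_def using gN assms by (intro sup_least) auto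
  have Dg: "c * D * (1 + e) \<le> Dg" unfolding Dg_def using gD assms by (intro inf_greatest) auto
  have cDe: "c * D * (1 + e) > 0" using cpos Dpos epos by simp
  have Dgpos: "Dg > 0" using Dg cDe by linarith
  have "Ng / Dg \<le> c * N / Dg" using Ng Dgpos by (simp add: divide_right_mono)
  also have "\<dots> \<le> c * N / (c * D * (1 + e))"
    using Dg cDe cpos Npos by (intro divide_left_mono) auto
  also have "\<dots> = N / (D * (1 + e))" using cpos by simp
  also have "\<dots> < N / D" using Npos Dpos epos
    by (intro divide_strict_left_mono) (auto simp: algebra_simps add_pos_pos mult_pos_pos)
  finally have lt: "Ng / Dg < N / D" .
  have "ratio_obj \<alpha> \<beta> g = ereal (Ng / Dg)"
    unfolding Ng_def Dg_def using Dgpos by (intro ratio_fin) (simp add: Dg_def)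
  moreover have "ratio_obj \<alpha> \<beta> ?f = ereal (N / D)"
    unfolding N_def D_def using Dpos by (intro ratio_fin) (simp add: D_def)
  ultimately have "ratio_obj \<alpha> \<beta> g < ratio_obj \<alpha> \<beta> ?f" using lt by simp
  then show False using assms(6) gP by force
qed

end
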